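(* Let $(g(m))_{m\ge1}$ be a sequence of complex numbers such that the series $\sum_{m\ge1}g(m)/m$ and $\sum_{m\ge1}g(m)(\log m)/m$ both converge. Define $G^\sharp(x)=\sum_{m>x}g(m)/m$ for real $x>0$ and assume that $\int_1^\infty|G^\sharp(t)|\,dt/t$ converges. Then for every real $D\ge1$, \[ \sum_{n\le D}\frac{(g\star\mathbf 1)(n)}{n}=\sum_{m\ge1}\frac{g(m)}{m}\Bigl(\log\frac{D}{m}+\gamma\Bigr)+\int_{e^\gamma D}^\infty G^\sharp(t)\frac{dt}{t}+E, \] where \[ |E|\le \frac1D\int_1^{e^\gamma}\sum_{m\le uD}|g(m)|\,\frac{du}{u}. \]
   Context: $\gamma$ is Euler's constant. $(g\star\mathbf 1)(n)=\sum_{m\mid n}g(m)$ is the Dirichlet convolution of $g$ with the constant function $1$. *)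

theory Defs
  imports "HOL-Analysis.Analysis"
begin

text \<open>Tail sum  G#(x) = sum over m > x of g(m)/m  (terms with m = 0 vanish anyway).\<close>
definition Gsharp :: "(nat \<Rightarrow> complex) \<Rightarrow> real \<Rightarrow> complex" where
  "Gsharp g x = (\<Sum>m. if real m > x then g m / of_nat m else 0)"

definition conv_one :: "(nat \<Rightarrow> complex) \<Rightarrow> nat \<Rightarrow> complex" where
  "conv_one g n = (\<Sum>m\<in>{m. m dvd n}. g m)"

end

theory Submission
  imports Defs
begin



lemma harm_step_bound:
  fixes m :: nat
  shows "harm (Suc m) - ln (real (Suc m) + 1) \<le> harm m - ln (real m + 1) + (2 / (4 * real m + 3) - 2 / (4 * real (Suc m) + 3))"
proof -
  define k where "k = real m + 1"
  have k1: "k \<ge> 1" unfolding k_def by simp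
  have l: "ln (k + 1) - ln k \<ge> 2 * ((k+1) - k) / (k + (k+1))"
    by (rule ln_inverse_approx_ge) (use k1 in auto)
  have hs: "harm (Suc m) = harm m + 1 / k" by (simp add: harm_Suc k_def divide_inverse add.commute)
  have kp: "k > 0" "2*k+1 > 0" "4*k-1 > 0" "4*k+3 > 0" using k1 by auto
  have e0: "1/k - 2/(2*k+1) = 1/(k*(2*k+1))" using kp by (simp add: field_simps)
  have e1: "1/k - 2/(2*k+1) = 8/(8*(k*(2*k+1)))" unfolding e0 by simp
  have e2: "2 / (4*k-1) - 2/(4*k+3) = 8/((4*k-1)*(4*k+3))" using kp by (simp add: field_simps)
  have e3: "8/(8*(k*(2*k+1))) \<le> 8/((4*k-1)*(4*k+3))"
  proof (rule frac_le)
    have "k * k \<ge> 1 * 1" by (rule mult_mono) (use k1 in auto)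
    then show "0 < (4*k-1)*(4*k+3)" "(4*k-1)*(4*k+3) \<le> 8*(k*(2*k+1))"
      using k1 by (auto simp: algebra_simps)
  qed auto
  have e: "1/k - 2/(2*k+1) \<le> 2 / (4*k-1) - 2/(4*k+3)"
    using e1 e2 e3 by simp
  have "harm (Suc m) - ln (real (Suc m) + 1) = harm m - ln k + 1/k - (ln (k+1) - ln k) - ln k + ln k"
    by (simp add: hs k_def add.commute)
  also have "\<dots> \<le> harm m - ln k + (1/k - 2/(2*k+1))" using l by (simp add: algebra_simps)
  also have "\<dots> \<le> harm m - ln k + (2 / (4*k-1) - 2/(4*k+3))" using e by simp
  finally show ?thesis unfolding k_def by (simp add: algebra_simps)
qed

lemma harm_gamma_lower:
  fixes n :: nat
  shows "euler_mascheroni - 2 / (4 * real n + 3) \<le> harm n - ln (real n + 1)"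
proof -
  define a where "a m = harm m - ln (real m + 1)" for m
  have A: "a m \<le> a n + (2 / (4 * real n + 3) - 2 / (4 * real m + 3))" if "n \<le> m" for m
    using that
  proof (induction m rule: dec_induct)
    case base then show ?case by simp
  next
    case (step m)
    then show ?case using harm_step_bound[of m] unfolding a_def by (simp add: algebra_simps)
  qed
  have B: "harm m - ln (real m) \<le> a n + 2 / (4 * real n + 3) + 1 / real m" if "n \<le> m" "1 \<le> m" for m
  proof -
    have "ln (real m + 1) - ln (real m) < 1 / real m" by (rule ln_diff_le_inverse) (use that in auto)
    moreover have "2 / (4 * real m + 3) \<ge> 0" by simp
    ultimately show ?thesis using A[OF that(1)] unfolding a_def by linarith
  qed
  have L1: "(\<lambda>m. harm m - ln (real m) :: real) \<longlonglongrightarrow> euler_mascheroni" by (rule euler_mascheroni_LIMSEQ)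
  have L2: "(\<lambda>m. a n + 2 / (4 * real n + 3) + 1 / real m) \<longlonglongrightarrow> a n + 2 / (4 * real n + 3) + 0"
    by (intro tendsto_intros lim_1_over_n)
  have ev: "eventually (\<lambda>m. harm m - ln (real m) \<le> a n + 2 / (4 * real n + 3) + 1 / real m) sequentially"
    using B eventually_ge_at_top[of "max n 1"] by (auto elim!: eventually_mono)
  have "euler_mascheroni \<le> a n + 2 / (4 * real n + 3) + 0"
    by (rule tendsto_le[OF _ L2 L1 ev]) simp
  then show ?thesis unfolding a_def by simp
qed

lemma harm_bound:
  fixes y :: real assumes y: "y \<ge> 1"
  shows "\<bar>harm (nat \<lfloor>y\<rfloor>) - ln y - euler_mascheroni\<bar> \<le> euler_mascheroni / y"
proof -
  define n where "n = nat \<lfloor>y\<rfloor>"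
  have n1: "n \<ge> 1" using y unfolding n_def by linarith
  have ny: "real n \<le> y" "y < real n + 1" using y unfolding n_def by linarith+
  have g1: "euler_mascheroni > (19/33::real)" by (rule euler_mascheroni_gt_19_over_33)
  have npos: "real n > 0" "real n + 1 > 0" "real n \<noteq> 0" "real n + 1 \<noteq> 0" using n1 by simp_all
  have U1: "harm n - ln (real n) - euler_mascheroni \<le> 1 / (2 * real n)"
  proof -
    have a: "euler_mascheroni \<ge> harm n - ln (real n + 1) + 1 / (2 * (real n + 1))"
    proof -
      have "euler_mascheroni \<ge> harm n - ln (of_nat (Suc n)) + inverse (of_nat (2*(n+1)) :: real)"
        using euler_mascheroni_bounds[OF n1] by (simp only: atLeastAtMost_iff)
      moreover have "inverse (of_nat (2*(n+1)) :: real) = 1 / (2 * (real n + 1))"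
        by (simp add: divide_inverse)
      moreover have "ln (of_nat (Suc n)) = ln (real n + 1)" by simp
      ultimately show ?thesis by (simp add: add.commute)
    qed
    have b: "ln (real n + 1) - ln (real n) \<le> (1 / real n + 1 / (real n + 1)) / 2"
    proof -
      have "ln (real n + 1) - ln (real n) \<le> 1 * (inverse (real n) + inverse (real n + 1)) / 2"
        by (rule ln_inverse_approx_le) (use npos in auto)
      then show ?thesis by (simp only: inverse_eq_divide mult_1)
    qed
    have c: "(1 / real n + 1 / (real n + 1)) / 2 - 1 / (2 * (real n + 1)) = 1 / (2 * real n)"
      by (simp add: add_divide_distrib mult.commute)
    show ?thesis using a b c by linarith
  qed
  have U2: "ln y - ln (real n) \<ge> 1 - real n / y"
  proof -
    have "ln (real n / y) \<le> real n / y - 1"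
      by (rule ln_le_minus_one) (use npos ny y in auto)
    then show ?thesis using npos y by (simp add: ln_div)
  qed
  define t where "t = 1 / (2 * real n)"
  define w where "w = 1 / y"
  have t: "t \<le> 1/2" "real n * t = 1/2" "0 \<le> t" using n1 npos unfolding t_def by (auto simp: field_simps)
  have w: "y * w = 1" "0 < w" using y unfolding w_def by auto
  have U3: "y * t - y + real n \<le> 1/2"
  proof -
    have "real n * (1 - t) \<le> y * (1 - t)" by (rule mult_right_mono) (use ny t in auto)
    then show ?thesis using t by (simp add: algebra_simps)
  qed
  have up: "harm n - ln y - euler_mascheroni \<le> euler_mascheroni / y"
  proof -
    have a: "harm n - ln y - euler_mascheroni \<le> t - 1 + real n * w"
    proof -
      have "real n / y = real n * w" unfolding w_def by simp
      then show ?thesis using U1 U2 t_def by linarith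
    qed
    have b: "w * (y * t - y + real n) \<le> w * (1/2)" by (rule mult_left_mono) (use U3 w in auto)
    have c: "w * (y * t - y + real n) = t * (y * w) - y * w + real n * w" by (simp add: algebra_simps)
    have d: "w * (1/2) \<le> w * euler_mascheroni" by (rule mult_left_mono) (use g1 w in auto)
    have e: "euler_mascheroni / y = w * euler_mascheroni" unfolding w_def by simp
    have f: "w * (y * t - y + real n) = t - 1 + real n * w" unfolding c w(1) by simp
    show ?thesis using a b d e f by linarith
  qed
  have lo: "- (euler_mascheroni / y) \<le> harm n - ln y - euler_mascheroni"
  proof -
    have "ln y \<le> ln (real n + 1)" using ny y by simp
    moreover have "euler_mascheroni - 2 / (4 * real n + 3) \<le> harm n - ln (real n + 1)" by (rule harm_gamma_lower)
    moreover have "2 / (4 * real n + 3) \<le> euler_mascheroni / (real n + 1)"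
    proof -
      have "(19/33) * (4 * real n + 3) \<le> euler_mascheroni * (4 * real n + 3)"
        using g1 by (intro mult_right_mono) auto
      moreover have "2 * (real n + 1) \<le> (19/33) * (4 * real n + 3)" using n1 by simp
      ultimately have "2 * (real n + 1) \<le> euler_mascheroni * (4 * real n + 3)" by linarith
      then show ?thesis by (simp add: divide_simps)
    qed
    moreover have "euler_mascheroni / (real n + 1) \<le> euler_mascheroni / y"
      using g1 ny y by (intro divide_left_mono) auto
    ultimately show ?thesis by linarith
  qed
  show ?thesis using up lo unfolding n_def by linarith
qed



lemma lhs_step:
  fixes g :: "nat \<Rightarrow> complex" and m N :: nat
  assumes m: "1 \<le> m"
  shows "g m / of_nat m * complex_of_real (harm (Suc N div m))
       = g m / of_nat m * complex_of_real (harm (N div m)) + (if m dvd Suc N then g m / of_nat (Suc N) else 0)"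
proof (cases "m dvd Suc N")
  case True
  then have md: "Suc N mod m = 0" by simp
  have e: "Suc N div m = Suc (N div m)" using div_Suc[of N m] md by simp
  have e2: "real m * real (Suc (N div m)) = real (Suc N)"
    using e True by (metis dvd_mult_div_cancel of_nat_mult)
  have "g m / of_nat m * complex_of_real (inverse (real (Suc (N div m)))) = g m / of_nat (Suc N)"
  proof -
    have "complex_of_real (real m * real (Suc (N div m))) = of_nat (Suc N)" using e2
      by (metis of_real_of_nat_eq)
    then have "of_nat m * of_nat (Suc (N div m)) = (of_nat (Suc N) :: complex)" by simp
    then show ?thesis using m by (simp add: field_simps)
  qed
  then show ?thesis using True by (simp add: e harm_Suc distrib_left)
next
  case False
  then have "Suc N mod m \<noteq> 0" by (simp add: dvd_eq_mod_eq_0)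
  then have e: "Suc N div m = N div m" using div_Suc[of N m] by simp
  then show ?thesis using False by simp
qed

lemma lhs_rearr:
  fixes g :: "nat \<Rightarrow> complex"
  shows "(\<Sum>n\<in>{1..N}. conv_one g n / of_nat n)
       = (\<Sum>m\<in>{1..N}. g m / of_nat m * complex_of_real (harm (N div m)))"
proof (induction N)
  case 0
  then show ?case by simp
next
  case (Suc N)
  have A: "(\<Sum>m\<in>{1..Suc N}. g m / of_nat m * complex_of_real (harm (Suc N div m)))
     = (\<Sum>m\<in>{1..Suc N}. g m / of_nat m * complex_of_real (harm (N div m)))
       + (\<Sum>m\<in>{1..Suc N}. (if m dvd Suc N then g m / of_nat (Suc N) else 0))"
    unfolding sum.distrib[symmetric] by (rule sum.cong[OF refl], rule lhs_step) simp
  have B: "(\<Sum>m\<in>{1..Suc N}. g m / of_nat m * complex_of_real (harm (N div m)))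
     = (\<Sum>m\<in>{1..N}. g m / of_nat m * complex_of_real (harm (N div m)))"
    by (simp add: sum.cl_ivl_Suc harm_expand)
  have C: "(\<Sum>m\<in>{1..Suc N}. (if m dvd Suc N then g m / of_nat (Suc N) else 0))
       = conv_one g (Suc N) / of_nat (Suc N)"
  proof -
    have S: "{m\<in>{1..Suc N}. m dvd Suc N} = {m. m dvd Suc N}"
      by (auto dest: dvd_imp_le intro: Suc_leI simp: Nat.gr0_conv_Suc)
      (metis dvd_0_left_iff nat.distinct(1) not_less_eq_eq le_0_eq)
    have "(\<Sum>m\<in>{1..Suc N}. (if m dvd Suc N then g m / of_nat (Suc N) else 0))
       = (\<Sum>m\<in>{m\<in>{1..Suc N}. m dvd Suc N}. g m / of_nat (Suc N))"
      by (rule sum.inter_filter[symmetric]) simp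
    also have "\<dots> = (\<Sum>m\<in>{m. m dvd Suc N}. g m) / of_nat (Suc N)"
      unfolding S by (rule sum_divide_distrib[symmetric])
    finally show ?thesis unfolding conv_one_def .
  qed
  show ?case using Suc A B C by simp
qed



lemma abel_aux:
  fixes a :: "nat \<Rightarrow> complex" and b :: "nat \<Rightarrow> real"
  assumes pq: "p \<le> q"
    and R: "\<And>k. p \<le> k \<Longrightarrow> k \<le> q \<Longrightarrow> norm (\<Sum>m\<in>{k..q}. a m) \<le> B"
    and dec: "\<And>m. p \<le> m \<Longrightarrow> m < q \<Longrightarrow> b (Suc m) \<le> b m"
  shows "norm ((\<Sum>m\<in>{p..q}. a m * of_real (b m)) - of_real (b p) * (\<Sum>m\<in>{p..q}. a m)) \<le> B * (b p - b q)"
  using pq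
proof (induction p rule: inc_induct)
  case base
  then show ?case by simp
next
  case (step n)
  define S where "S = (\<Sum>m\<in>{Suc n..q}. a m * of_real (b m))"
  define R' where "R' = (\<Sum>m\<in>{Suc n..q}. a m)"
  have IH: "norm (S - of_real (b (Suc n)) * R') \<le> B * (b (Suc n) - b q)"
    using step.IH unfolding S_def R'_def .
  have s1: "(\<Sum>m\<in>{n..q}. a m * of_real (b m)) = a n * of_real (b n) + S"
    unfolding S_def using step.hyps by (simp add: sum.atLeast_Suc_atMost)
  have s2: "(\<Sum>m\<in>{n..q}. a m) = a n + R'"
    unfolding R'_def using step.hyps by (simp add: sum.atLeast_Suc_atMost)
  have e: "(\<Sum>m\<in>{n..q}. a m * of_real (b m)) - of_real (b n) * (\<Sum>m\<in>{n..q}. a m)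
     = (S - of_real (b (Suc n)) * R') + of_real (b (Suc n) - b n) * R'"
    unfolding s1 s2 by (simp add: algebra_simps)
  have nR: "norm R' \<le> B" unfolding R'_def using R[of "Suc n"] step.hyps by simp
  have db: "b (Suc n) \<le> b n" using dec step.hyps by simp
  have "norm (of_real (b (Suc n) - b n) * R') = \<bar>b (Suc n) - b n\<bar> * norm R'"
    by (simp only: norm_mult norm_of_real)
  also have "\<bar>b (Suc n) - b n\<bar> = b n - b (Suc n)" using db by simp
  also have "(b n - b (Suc n)) * norm R' \<le> (b n - b (Suc n)) * B" using db nR by (intro mult_left_mono) auto
  finally have "norm (of_real (b (Suc n) - b n) * R') \<le> (b n - b (Suc n)) * B" .
  then have "norm ((S - of_real (b (Suc n)) * R') + of_real (b (Suc n) - b n) * R') \<le> B * (b (Suc n) - b q) + (b n - b (Suc n)) * B"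
    using IH norm_triangle_ineq[of "S - of_real (b (Suc n)) * R'" "of_real (b (Suc n) - b n) * R'"] by linarith
  then show ?case unfolding e by (simp add: algebra_simps)
qed

lemma abel_bound:
  fixes a :: "nat \<Rightarrow> complex" and b :: "nat \<Rightarrow> real"
  assumes pq: "p \<le> q"
    and R: "\<And>k. p \<le> k \<Longrightarrow> k \<le> q \<Longrightarrow> norm (\<Sum>m\<in>{k..q}. a m) \<le> B"
    and dec: "\<And>m. p \<le> m \<Longrightarrow> m < q \<Longrightarrow> b (Suc m) \<le> b m"
    and bq: "b q \<ge> 0" and bp: "b p \<le> 1"
  shows "norm (\<Sum>m\<in>{p..q}. a m * of_real (b m)) \<le> 2 * B"
proof -
  have A: "norm ((\<Sum>m\<in>{p..q}. a m * of_real (b m)) - of_real (b p) * (\<Sum>m\<in>{p..q}. a m)) \<le> B * (b p - b q)"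
    by (rule abel_aux[of p q a B b, OF pq R dec])
  have B0: "0 \<le> B" using R[of p] pq by (meson norm_ge_zero order_trans order_refl)
  have bpq: "b q \<le> b p"
  proof -
    have "\<forall>k. p \<le> k \<longrightarrow> k \<le> q \<longrightarrow> b q \<le> b k"
    proof (intro allI impI)
      fix k assume "p \<le> k" "k \<le> q"
      from \<open>k \<le> q\<close> \<open>p \<le> k\<close> show "b q \<le> b k"
      proof (induction k rule: inc_induct)
        case base then show ?case by simp
      next
        case (step n) then show ?case using dec[of n] by simp
      qed
    qed
    then show ?thesis using pq by simp
  qed
  have "norm (of_real (b p) * (\<Sum>m\<in>{p..q}. a m)) = \<bar>b p\<bar> * norm (\<Sum>m\<in>{p..q}. a m)"
    by (simp only: norm_mult norm_of_real)
  also have "\<bar>b p\<bar> = b p" using bq bpq by simp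
  also have "b p * norm (\<Sum>m\<in>{p..q}. a m) \<le> b p * B" using bq bpq R[of p] pq by (intro mult_left_mono) auto
  finally have C: "norm (of_real (b p) * (\<Sum>m\<in>{p..q}. a m)) \<le> b p * B" .
  have "norm (\<Sum>m\<in>{p..q}. a m * of_real (b m)) \<le> B * (b p - b q) + b p * B"
    using A C norm_triangle_sub[of "(\<Sum>m\<in>{p..q}. a m * of_real (b m))" "of_real (b p) * (\<Sum>m\<in>{p..q}. a m)"]
    by linarith
  also have "\<dots> \<le> 2 * B"
  proof -
    have "B * (b p - b q) \<le> B * 1" by (rule mult_left_mono) (use B0 bq bp in auto)
    moreover have "b p * B \<le> 1 * B" by (rule mult_right_mono) (use B0 bp in auto)
    ultimately show ?thesis by linarith
  qed
  finally show ?thesis .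
qed


lemma summable_xs:
  fixes g :: "nat \<Rightarrow> complex"
  assumes "summable (\<lambda>m. g m / of_nat m)"
  shows "summable (\<lambda>m. if real m > t then g m / of_nat m else 0)"
proof -
  have fin: "finite {m::nat. real m \<le> t}"
    by (rule finite_subset[of _ "{..nat \<lfloor>t\<rfloor>}"]) (auto simp: le_nat_floor)
  have "summable (\<lambda>m. g m / of_nat m - (if real m \<le> t then g m / of_nat m else 0))"
    by (intro summable_diff assms summable_finite[OF fin]) auto
  also have "(\<lambda>m. g m / of_nat m - (if real m \<le> t then g m / of_nat m else 0))
      = (\<lambda>m. if real m > t then g m / of_nat m else 0)" by (rule ext) auto
  finally show ?thesis .
qed

lemma Gsharp_LIMSEQ:
  fixes g :: "nat \<Rightarrow> complex"
  assumes "summable (\<lambda>m. g m / of_nat m)"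
  shows "(\<lambda>q. \<Sum>m\<in>{Suc M..q}. g m / of_nat m) \<longlonglongrightarrow> Gsharp g (real M)"
proof -
  let ?f = "\<lambda>m. if real m > real M then g m / of_nat m else 0"
  have "(\<lambda>q. \<Sum>m<Suc q. ?f m) \<longlonglongrightarrow> suminf ?f"
    using LIMSEQ_Suc[OF summable_LIMSEQ[OF summable_xs[OF assms]]] .
  moreover have "(\<Sum>m<Suc q. ?f m) = (\<Sum>m\<in>{Suc M..q}. g m / of_nat m)" for q
  proof -
    have "(\<Sum>m<Suc q. ?f m) = (\<Sum>m\<in>{m\<in>{..<Suc q}. real m > real M}. g m / of_nat m)"
      by (rule sum.inter_filter[symmetric]) simp
    also have "{m\<in>{..<Suc q}. real m > real M} = {Suc M..q}" by auto
    finally show ?thesis .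
  qed
  ultimately show ?thesis unfolding Gsharp_def by simp
qed

lemma tail_log:
  fixes g :: "nat \<Rightarrow> complex" and T :: real
  assumes sx: "summable (\<lambda>m. g m / of_nat m)"
    and sy: "summable (\<lambda>m. g m * complex_of_real (ln (real m)) / of_nat m)"
    and T: "T \<ge> 1"
  shows "(\<lambda>M. Gsharp g (real M) * complex_of_real (ln (real M / T))) \<longlonglongrightarrow> 0"
proof (rule LIMSEQ_I)
  fix r :: real assume r: "0 < r"
  define e where "e = r / 4"
  have e: "e > 0" using r unfolding e_def by simp
  let ?y = "\<lambda>m. g m * complex_of_real (ln (real m)) / of_nat m"
  obtain N0 where N0: "\<And>m n. m \<ge> N0 \<Longrightarrow> norm (sum ?y {m..<n}) < e"
    using sy e unfolding summable_Cauchy by meson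
  define N where "N = max N0 (nat \<lceil>T\<rceil> + 1)"
  have "\<forall>M\<ge>N. norm (Gsharp g (real M) * complex_of_real (ln (real M / T)) - 0) < r"
  proof (intro allI impI)
    fix M assume M: "M \<ge> N"
    have MT: "real M \<ge> T" using M unfolding N_def by linarith
    have M2: "M \<ge> 2" using M T unfolding N_def by linarith
    have MN0: "M \<ge> N0" using M unfolding N_def by simp
    define L where "L = ln (real M / T)"
    have L0: "L \<ge> 0" unfolding L_def using MT T by simp
    define b where "b m = L / ln (real m)" for m
    have bnd: "norm (of_real L * (\<Sum>m\<in>{Suc M..q}. g m / of_nat m)) \<le> 2 * e" if q: "q \<ge> Suc M" for q
    proof -
      have A: "norm (\<Sum>m\<in>{Suc M..q}. ?y m * of_real (b m)) \<le> 2 * e"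
      proof (rule abel_bound)
        show "Suc M \<le> q" by (rule q)
        show "norm (sum ?y {k..q}) \<le> e" if "Suc M \<le> k" "k \<le> q" for k
          using N0[of k "Suc q"] that MN0 by (simp add: atLeastLessThanSuc_atLeastAtMost)
        show "b (Suc m) \<le> b m" if "Suc M \<le> m" "m < q" for m
        proof -
          have "ln (real m) > 0" using that M2 by simp
          moreover have "ln (real m) \<le> ln (real (Suc m))" using that M2 by simp
          moreover have "ln (real (Suc m)) > 0" using that M2 by simp
          ultimately show ?thesis unfolding b_def using L0
            by (intro divide_left_mono mult_pos_pos) auto
        qed
        show "b q \<ge> 0" unfolding b_def using L0 q M2 by simp
        show "b (Suc M) \<le> 1"
        proof -
          have "ln (real (Suc M)) > 0" using M2 by simp
          moreover have "L \<le> ln (real (Suc M))"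
          proof -
            have "real M * 1 \<le> real M * T" by (rule mult_left_mono) (use T in auto)
            then have "real M / T \<le> real M" using T by (simp add: divide_le_eq)
            then have "real M / T \<le> real (Suc M)" by linarith
            moreover have "real M / T > 0" using M2 T by simp
            ultimately show ?thesis unfolding L_def using ln_mono by blast
          qed
          ultimately show ?thesis unfolding b_def by simp
        qed
      qed
      have "(\<Sum>m\<in>{Suc M..q}. ?y m * of_real (b m)) = of_real L * (\<Sum>m\<in>{Suc M..q}. g m / of_nat m)"
        unfolding sum_distrib_left
      proof (rule sum.cong[OF refl])
        fix m assume "m \<in> {Suc M..q}"
        then have "ln (real m) > 0" using M2 by simp
        then show "?y m * of_real (b m) = of_real L * (g m / of_nat m)"
          unfolding b_def by (simp add: field_simps)
      qed
      then show ?thesis using A by simp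
    qed
    have lim: "(\<lambda>q. of_real L * (\<Sum>m\<in>{Suc M..q}. g m / of_nat m)) \<longlonglongrightarrow> of_real L * Gsharp g (real M)"
      by (intro tendsto_intros Gsharp_LIMSEQ sx)
    have "norm (of_real L * Gsharp g (real M)) \<le> 2 * e"
      by (rule tendsto_le[OF _ tendsto_const tendsto_norm[OF lim]])
         (use bnd in \<open>auto intro: eventually_mono[OF eventually_ge_at_top[of "Suc M"]]\<close>)
    then show "norm (Gsharp g (real M) * complex_of_real (ln (real M / T)) - 0) < r"
      using e unfolding e_def L_def by (simp add: mult.commute)
  qed
  then show "\<exists>no. \<forall>n\<ge>no. norm (Gsharp g (real n) * complex_of_real (ln (real n / T)) - 0) < r" by blast
qed




lemma inv_int:
  fixes a b :: real assumes "0 < a" "a \<le> b"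
  shows "((\<lambda>t. 1 / t) has_integral (ln b - ln a)) {a..b}"
  apply (rule fundamental_theorem_of_calculus[OF assms(2)])
  using assms by (auto intro!: derivative_eq_intros simp: has_real_derivative_iff_has_vector_derivative[symmetric] field_simps)

lemma inv_int_c:
  fixes a b :: real and C :: complex assumes "0 < a" "a \<le> b"
  shows "((\<lambda>t. C / complex_of_real t) has_integral (C * complex_of_real (ln b - ln a))) {a..b}"
proof -
  have "((\<lambda>t. C * complex_of_real (1 / t)) has_integral (C * complex_of_real (ln b - ln a))) {a..b}"
    by (intro has_integral_mult_right has_integral_of_real inv_int assms)
  then show ?thesis by (simp add: divide_inverse)
qed

lemma int_step:
  fixes a b m :: real and C :: complex assumes "0 < a" "a \<le> m" "m \<le> b"
  shows "((\<lambda>t. if t < m then C / complex_of_real t else 0) has_integral (C * complex_of_real (ln m - ln a))) {a..b}"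
proof -
  have X: "((\<lambda>t. if t \<in> {a..m} then C / complex_of_real t else 0) has_integral (C * complex_of_real (ln m - ln a))) {a..b}"
    unfolding has_integral_restrict_Int
    using inv_int_c[of a m C] assms by (simp add: Int_absorb2 Int_commute)
  show ?thesis
    by (rule has_integral_spike_finite[OF _ _ X, where S="{m}"]) (use assms in auto)
qed

lemma Gsharp_split:
  fixes g :: "nat \<Rightarrow> complex" and t T :: real and M :: nat
  assumes sx: "summable (\<lambda>m. g m / of_nat m)"
    and t: "T \<le> t" "t \<le> real M" and T0: "0 \<le> T"
  shows "Gsharp g t = Gsharp g (real M) + (\<Sum>m\<in>{Suc (nat \<lfloor>T\<rfloor>)..M}. if real m > t then g m / of_nat m else 0)"
proof -
  define S where "S = {Suc (nat \<lfloor>T\<rfloor>)..M}"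
  define f where "f m = (if m \<in> S then (if real m > t then g m / of_nat m else 0) else 0)" for m
  have fs: "f sums (\<Sum>m\<in>S. f m)" by (rule sums_finite) (auto simp: S_def f_def)
  have fsum: "(\<Sum>m\<in>S. f m) = (\<Sum>m\<in>S. if real m > t then g m / of_nat m else 0)"
    unfolding f_def by simp
  have eq: "(\<lambda>m. if real m > t then g m / of_nat m else 0)
      = (\<lambda>m. (if real m > real M then g m / of_nat m else 0) + f m)"
  proof
    fix m
    show "(if real m > t then g m / of_nat m else 0) = (if real m > real M then g m / of_nat m else 0) + f m"
    proof (cases "real m > real M")
      case True then show ?thesis using t by (auto simp: f_def S_def)
    next
      case False
      have "real m > t \<Longrightarrow> m \<in> S"
      proof -
        assume "real m > t"
        then have "real m > T" using t by simp
        then have "m > nat \<lfloor>T\<rfloor>" using T0 by linarith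
        then show "m \<in> S" using False unfolding S_def by auto
      qed
      then show ?thesis using False by (auto simp: f_def)
    qed
  qed
  have "Gsharp g t = (\<Sum>m. (if real m > real M then g m / of_nat m else 0) + f m)"
    unfolding Gsharp_def eq ..
  also have "\<dots> = Gsharp g (real M) + (\<Sum>m. f m)"
    unfolding Gsharp_def by (rule suminf_add[symmetric, OF summable_xs[OF sx, of "real M"] sums_summable[OF fs]])
  also have "(\<Sum>m. f m) = (\<Sum>m\<in>S. if real m > t then g m / of_nat m else 0)"
    using fs fsum sums_unique by metis
  finally show ?thesis unfolding S_def .
qed


lemma J_int:
  fixes g :: "nat \<Rightarrow> complex" and T :: real and M :: nat
  assumes sx: "summable (\<lambda>m. g m / of_nat m)"
    and T: "0 < T" "T \<le> real M"
  shows "((\<lambda>t. Gsharp g t / complex_of_real t) has_integral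
     (Gsharp g (real M) * of_real (ln (real M) - ln T)
      + (\<Sum>m\<in>{Suc (nat \<lfloor>T\<rfloor>)..M}. g m / of_nat m * of_real (ln (real m) - ln T)))) {T..real M}"
proof -
  define S where "S = {Suc (nat \<lfloor>T\<rfloor>)..M}"
  have int1: "((\<lambda>t. Gsharp g (real M) / complex_of_real t) has_integral
      (Gsharp g (real M) * of_real (ln (real M) - ln T))) {T..real M}"
    by (rule inv_int_c) (use T in auto)
  have int2: "((\<lambda>t. \<Sum>m\<in>S. (if t < real m then (g m / of_nat m) / complex_of_real t else 0)) has_integral
      (\<Sum>m\<in>S. g m / of_nat m * of_real (ln (real m) - ln T))) {T..real M}"
  proof (rule has_integral_sum)
    show "finite S" unfolding S_def by simp
    fix m assume m: "m \<in> S"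
    have "real m > T"
    proof -
      have "m > nat \<lfloor>T\<rfloor>" using m unfolding S_def by auto
      then show ?thesis using T by linarith
    qed
    moreover have "real m \<le> real M" using m unfolding S_def by auto
    ultimately show "((\<lambda>t. if t < real m then (g m / of_nat m) / complex_of_real t else 0) has_integral
        (g m / of_nat m * of_real (ln (real m) - ln T))) {T..real M}"
      by (intro int_step) (use T in auto)
  qed
  note int3 = has_integral_add[OF int1 int2]
  show ?thesis unfolding S_def[symmetric]
  proof (rule has_integral_spike_finite[OF _ _ int3, where S="{}"])
    fix t assume t: "t \<in> {T..real M} - {}"
    have Gs: "Gsharp g t = Gsharp g (real M) + (\<Sum>m\<in>S. if real m > t then g m / of_nat m else 0)"
      unfolding S_def by (rule Gsharp_split[OF sx]) (use t T in auto)
    have e: "(\<Sum>m\<in>S. if real m > t then g m / of_nat m else 0) / complex_of_real t = (\<Sum>m\<in>S. (if t < real m then (g m / of_nat m) / complex_of_real t else 0))"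
      unfolding sum_divide_distrib by (rule sum.cong) auto
    show "Gsharp g t / complex_of_real t = Gsharp g (real M) / complex_of_real t +
        (\<Sum>m\<in>S. (if t < real m then (g m / of_nat m) / complex_of_real t else 0))"
      unfolding Gs add_divide_distrib e ..
  qed simp
qed


lemma I_lim:
  fixes g :: "nat \<Rightarrow> complex" and T :: real
  assumes sx: "summable (\<lambda>m. g m / of_nat m)"
    and hint: "(\<lambda>t. norm (Gsharp g t) / t) integrable_on {1..}"
    and T: "1 \<le> T"
  shows "(\<lambda>M. integral {T..real M} (\<lambda>t. Gsharp g t / complex_of_real t))
           \<longlonglongrightarrow> integral {T..} (\<lambda>t. Gsharp g t / complex_of_real t)"
proof -
  define F where "F t = Gsharp g t / complex_of_real t" for t
  define f where "f k t = (if t \<in> {T..real k} then F t else 0)" for k :: nat and t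
  define G where "G t = (if t \<in> {T..} then F t else 0)" for t
  have set1: "{T..real k} \<inter> {1..} = {T..real k}" for k using T by auto
  have set2: "{T..} \<inter> {1..} = {T..}" using T by auto
  have fi: "f k integrable_on {1..}" for k
  proof (cases "T \<le> real k")
    case True
    have "F integrable_on {T..real k}"
      unfolding F_def using J_int[OF sx, of T k] True T by (auto intro: has_integral_integrable)
    then obtain i where "(F has_integral i) {T..real k}" by blast
    then have "(f k has_integral i) {1..}"
      unfolding f_def has_integral_restrict_Int set1 .
    then show ?thesis by blast
  next
    case False
    then have "f k = (\<lambda>t. 0)" unfolding f_def by (auto intro!: ext)
    then show ?thesis by (simp add: integrable_0)
  qed
  have le: "norm (f k t) \<le> norm (Gsharp g t) / t" if "t \<in> {1..}" for k t
  proof -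
    have tp: "t > 0" using that by auto
    have "norm (F t) = norm (Gsharp g t) / t" unfolding F_def using tp by (simp add: norm_divide)
    moreover have "0 \<le> norm (Gsharp g t) / t" using tp by simp
    ultimately show ?thesis unfolding f_def by auto
  qed
  have conv: "(\<lambda>k. f k t) \<longlonglongrightarrow> G t" for t
  proof (rule tendsto_eventually)
    show "\<forall>\<^sub>F k in sequentially. f k t = G t"
      using eventually_ge_at_top[of "nat \<lceil>t\<rceil>"]
    proof (rule eventually_mono)
      fix k assume "nat \<lceil>t\<rceil> \<le> k"
      then have "t \<le> real k" by linarith
      then show "f k t = G t" unfolding f_def G_def by auto
    qed
  qed
  have DC: "(\<lambda>k. integral {1..} (f k)) \<longlonglongrightarrow> integral {1..} G"
    by (rule dominated_convergence(2)[OF fi hint le conv])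
  have e1: "integral {1..} (f k) = integral {T..real k} F" for k
    unfolding f_def integral_restrict_Int set1 ..
  have e2: "integral {1..} G = integral {T..} F"
    unfolding G_def integral_restrict_Int set2 ..
  show ?thesis using DC unfolding e1 e2 F_def .
qed


lemma main_plus_I:
  fixes g :: "nat \<Rightarrow> complex" and D :: real
  assumes sx: "summable (\<lambda>m. g m / of_nat m)"
    and sy: "summable (\<lambda>m. g m * complex_of_real (ln (real m)) / of_nat m)"
    and hint: "(\<lambda>t. norm (Gsharp g t) / t) integrable_on {1..}"
    and D: "D \<ge> 1"
  shows "(\<Sum>m. g m / of_nat m * complex_of_real (ln (D / real m) + euler_mascheroni))
         + integral {exp euler_mascheroni * D..} (\<lambda>t. Gsharp g t / complex_of_real t)
       = (\<Sum>m\<in>{1..nat \<lfloor>exp euler_mascheroni * D\<rfloor>}. g m / of_nat m * complex_of_real (ln (D / real m) + euler_mascheroni))"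
proof -
  define T where "T = exp euler_mascheroni * D"
  define K where "K = nat \<lfloor>T\<rfloor>"
  define h where "h m = g m / of_nat m * complex_of_real (ln (D / real m) + euler_mascheroni)" for m
  define F where "F t = Gsharp g t / complex_of_real t" for t
  have g0: "(euler_mascheroni::real) > 0" by (rule euler_mascheroni_pos)
  have eg: "exp (euler_mascheroni::real) \<ge> 1" using g0 by simp
  have TD: "T \<ge> D" unfolding T_def using eg D by (simp add: mult_le_cancel_right1)
  have T1: "T \<ge> 1" using TD D by simp
  have lnT: "ln T = euler_mascheroni + ln D" unfolding T_def using D by (simp add: ln_mult)
  have hform: "h m = complex_of_real (ln D + euler_mascheroni) * (g m / of_nat m)
      - g m * complex_of_real (ln (real m)) / of_nat m" for m
  proof (cases "m = 0")
    case True then show ?thesis unfolding h_def by simp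
  next
    case False
    then have "ln (D / real m) = ln D - ln (real m)" using D by (simp add: ln_div)
    then have "h m = g m / of_nat m * (of_real (ln D) - of_real (ln (real m)) + of_real euler_mascheroni)"
      unfolding h_def by simp
    also have "\<dots> = (of_real (ln D) + of_real euler_mascheroni) * (g m / of_nat m) - g m / of_nat m * of_real (ln (real m))"
      by (simp add: algebra_simps)
    also have "\<dots> = complex_of_real (ln D + euler_mascheroni) * (g m / of_nat m)
      - g m * complex_of_real (ln (real m)) / of_nat m" by simp
    finally show ?thesis .
  qed
  have sh: "summable h" unfolding hform by (intro summable_diff summable_mult sx sy)
  have hK: "h m = - (g m / of_nat m * of_real (ln (real m) - ln T))" if "m \<ge> 1" for m
  proof -
    have e: "ln (D / real m) + euler_mascheroni = - (ln (real m) - ln T)" using that D lnT by (simp add: ln_div)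
    show ?thesis unfolding h_def e of_real_minus mult_minus_right ..
  qed
  have L1: "(\<lambda>M. (\<Sum>m<Suc M. h m) + integral {T..real M} F) \<longlonglongrightarrow> suminf h + integral {T..} F"
    unfolding F_def
    by (intro tendsto_add LIMSEQ_Suc[OF summable_LIMSEQ[OF sh]] I_lim[OF sx hint T1])
  have ev: "\<forall>\<^sub>F M in sequentially. (\<Sum>m<Suc M. h m) + integral {T..real M} F
       = (\<Sum>m\<in>{1..K}. h m) + Gsharp g (real M) * complex_of_real (ln (real M / T))"
    using eventually_ge_at_top[of "max (nat \<lceil>T\<rceil>) K"]
  proof (rule eventually_mono)
    fix M assume M: "max (nat \<lceil>T\<rceil>) K \<le> M"
    have MT: "T \<le> real M" using M by linarith
    have KM: "K \<le> M" using M by simp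
    have int: "integral {T..real M} F = Gsharp g (real M) * of_real (ln (real M) - ln T)
      + (\<Sum>m\<in>{Suc K..M}. g m / of_nat m * of_real (ln (real m) - ln T))"
      unfolding F_def K_def using J_int[OF sx, of T M] MT T1 by (intro integral_unique) auto
    have s1: "{..<Suc M} = insert 0 ({1..K} \<union> {Suc K..M})" using KM by auto
    have s2: "(\<Sum>m<Suc M. h m) = h 0 + ((\<Sum>m\<in>{1..K}. h m) + (\<Sum>m\<in>{Suc K..M}. h m))"
      unfolding s1 by (subst sum.insert) (auto simp: sum.union_disjoint)
    have s3: "(\<Sum>m\<in>{Suc K..M}. h m) = - (\<Sum>m\<in>{Suc K..M}. g m / of_nat m * of_real (ln (real m) - ln T))"
      unfolding sum_negf[symmetric] by (rule sum.cong) (auto simp: hK)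
    have h0: "h 0 = 0" unfolding h_def by simp
    have lnM: "ln (real M / T) = ln (real M) - ln T" using MT T1 by (simp add: ln_div)
    show "(\<Sum>m<Suc M. h m) + integral {T..real M} F
       = (\<Sum>m\<in>{1..K}. h m) + Gsharp g (real M) * complex_of_real (ln (real M / T))"
      unfolding s2 s3 int h0 lnM by simp
  qed
  have L2: "(\<lambda>M. (\<Sum>m\<in>{1..K}. h m) + Gsharp g (real M) * complex_of_real (ln (real M / T)))
      \<longlonglongrightarrow> (\<Sum>m\<in>{1..K}. h m)"
    using tendsto_add[OF tendsto_const tail_log[OF sx sy T1], of "\<Sum>m\<in>{1..K}. h m"] by simp
  have L3: "(\<lambda>M. (\<Sum>m<Suc M. h m) + integral {T..real M} F) \<longlonglongrightarrow> (\<Sum>m\<in>{1..K}. h m)"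
  proof (rule Lim_transform_eventually[OF L2])
    show "\<forall>\<^sub>F M in sequentially. (\<Sum>m\<in>{1..K}. h m) + Gsharp g (real M) * complex_of_real (ln (real M / T))
       = (\<Sum>m<Suc M. h m) + integral {T..real M} F"
      using ev by (rule eventually_mono) (rule sym)
  qed
  have "suminf h + integral {T..} F = (\<Sum>m\<in>{1..K}. h m)"
    using LIMSEQ_unique[OF L1 L3] .
  then show ?thesis unfolding h_def F_def T_def K_def .
qed


lemma div_floor_nat:
  fixes D :: real and m :: nat assumes "D \<ge> 0" "m > 0"
  shows "nat \<lfloor>D\<rfloor> div m = nat \<lfloor>D / real m\<rfloor>"
proof -
  have "\<lfloor>D / real_of_int (int m)\<rfloor> = \<lfloor>D\<rfloor> div int m" by (rule floor_divide_real_eq_div) simp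
  then have "\<lfloor>D / real m\<rfloor> = \<lfloor>D\<rfloor> div int m" by simp
  then have "nat \<lfloor>D / real m\<rfloor> = nat \<lfloor>D\<rfloor> div nat (int m)"
    using assms by (simp add: nat_div_distrib)
  then show ?thesis by simp
qed

lemma R_int:
  fixes g :: "nat \<Rightarrow> complex" and D :: real
  assumes D: "D \<ge> 1"
  shows "((\<lambda>u. (\<Sum>m\<in>{1..nat \<lfloor>u * D\<rfloor>}. norm (g m)) / u) has_integral
     (\<Sum>m\<in>{1..nat \<lfloor>exp euler_mascheroni * D\<rfloor>}. norm (g m) * (euler_mascheroni - ln (max 1 (real m / D)))))
     {1..exp euler_mascheroni}"
proof -
  define E where "E = exp (euler_mascheroni :: real)"
  define K where "K = nat \<lfloor>E * D\<rfloor>"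
  define a where "a m = max 1 (real m / D)" for m :: nat
  have g0: "(euler_mascheroni::real) > 0" by (rule euler_mascheroni_pos)
  have E1: "E \<ge> 1" unfolding E_def using g0 by simp
  have lnE: "ln E = euler_mascheroni" unfolding E_def by simp
  have aE: "a m \<le> E" if "m \<in> {1..K}" for m
  proof -
    have "real m \<le> E * D" using that D E1 unfolding K_def by auto linarith
    then have "real m / D \<le> E" using D by (simp add: divide_le_eq mult.commute)
    then show ?thesis unfolding a_def using E1 by simp
  qed
  have a1: "a m \<ge> 1" for m unfolding a_def by simp
  have terms: "((\<lambda>u. if u \<in> {a m..E} then norm (g m) / u else 0) has_integral
      (norm (g m) * (euler_mascheroni - ln (a m)))) {1..E}" if m: "m \<in> {1..K}" for m
  proof -
    have "((\<lambda>u. norm (g m) * (1 / u)) has_integral (norm (g m) * (ln E - ln (a m)))) {a m..E}"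
      by (intro has_integral_mult_right inv_int) (use a1[of m] aE[OF m] in auto)
    then have "((\<lambda>u. norm (g m) / u) has_integral (norm (g m) * (euler_mascheroni - ln (a m)))) ({a m..E} \<inter> {1..E})"
      using a1[of m] unfolding lnE by (simp add: Int_absorb2)
    then show ?thesis unfolding has_integral_restrict_Int .
  qed
  have S: "((\<lambda>u. \<Sum>m\<in>{1..K}. if u \<in> {a m..E} then norm (g m) / u else 0) has_integral
      (\<Sum>m\<in>{1..K}. norm (g m) * (euler_mascheroni - ln (a m)))) {1..E}"
    by (rule has_integral_sum) (use terms in auto)
  have "((\<lambda>u. (\<Sum>m\<in>{1..nat \<lfloor>u * D\<rfloor>}. norm (g m)) / u) has_integral
      (\<Sum>m\<in>{1..K}. norm (g m) * (euler_mascheroni - ln (a m)))) {1..E}"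
  proof (rule has_integral_spike_finite[OF _ _ S, where S="{}"])
    fix u assume u: "u \<in> {1..E} - {}"
    have set: "{m \<in> {1..K}. u \<in> {a m..E}} = {1..nat \<lfloor>u * D\<rfloor>}"
    proof (intro set_eqI iffI)
      fix m assume "m \<in> {m \<in> {1..K}. u \<in> {a m..E}}"
      then have "1 \<le> m" "real m / D \<le> u" unfolding a_def by auto
      then have "real m \<le> u * D" using D by (simp add: divide_le_eq)
      then show "m \<in> {1..nat \<lfloor>u * D\<rfloor>}" using \<open>1 \<le> m\<close> by auto linarith
    next
      fix m assume m: "m \<in> {1..nat \<lfloor>u * D\<rfloor>}"
      then have m1: "1 \<le> m" and mu: "real m \<le> u * D" by auto linarith
      have "u * D \<le> E * D" using u D by (intro mult_right_mono) auto
      then have "m \<le> K" using mu unfolding K_def by linarith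
      moreover have "real m / D \<le> u" using mu D by (simp add: divide_le_eq)
      ultimately show "m \<in> {m \<in> {1..K}. u \<in> {a m..E}}" using m1 u unfolding a_def by auto
    qed
    have "(\<Sum>m\<in>{1..K}. if u \<in> {a m..E} then norm (g m) / u else 0)
       = (\<Sum>m\<in>{m \<in> {1..K}. u \<in> {a m..E}}. norm (g m) / u)"
      by (rule sum.inter_filter[symmetric]) simp
    also have "\<dots> = (\<Sum>m\<in>{1..nat \<lfloor>u * D\<rfloor>}. norm (g m)) / u"
      unfolding set by (rule sum_divide_distrib[symmetric])
    finally show "(\<Sum>m\<in>{1..nat \<lfloor>u * D\<rfloor>}. norm (g m)) / u
        = (\<Sum>m\<in>{1..K}. if u \<in> {a m..E} then norm (g m) / u else 0)" by simp
  qed simp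
  then show ?thesis unfolding E_def K_def a_def .
qed


lemma term_bound:
  fixes g :: "nat \<Rightarrow> complex" and D :: real and m :: nat
  assumes D: "D \<ge> 1" and m: "m \<in> {1..nat \<lfloor>exp euler_mascheroni * D\<rfloor>}"
  shows "norm ((if m \<le> nat \<lfloor>D\<rfloor> then g m / of_nat m * complex_of_real (harm (nat \<lfloor>D\<rfloor> div m)) else 0)
      - g m / of_nat m * complex_of_real (ln (D / real m) + euler_mascheroni))
    \<le> norm (g m) / D * (euler_mascheroni - ln (max 1 (real m / D)))"
proof -
  have g0: "(euler_mascheroni::real) > 0" by (rule euler_mascheroni_pos)
  have m1: "m \<ge> 1" "real m > 0" using m by auto
  have nx: "norm (g m / of_nat m) = norm (g m) / real m" by (simp add: norm_divide)
  show ?thesis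
  proof (cases "m \<le> nat \<lfloor>D\<rfloor>")
    case True
    then have mD: "real m \<le> D" using D by linarith
    define y where "y = D / real m"
    have y1: "y \<ge> 1" unfolding y_def using mD m1 by simp
    have dv: "nat \<lfloor>D\<rfloor> div m = nat \<lfloor>y\<rfloor>" unfolding y_def by (rule div_floor_nat) (use D m1 in auto)
    have mx: "max 1 (real m / D) = 1" using mD D by simp
    have "(if m \<le> nat \<lfloor>D\<rfloor> then g m / of_nat m * complex_of_real (harm (nat \<lfloor>D\<rfloor> div m)) else 0)
      - g m / of_nat m * complex_of_real (ln (D / real m) + euler_mascheroni)
      = g m / of_nat m * complex_of_real (harm (nat \<lfloor>y\<rfloor>) - ln y - euler_mascheroni)"
      using True unfolding dv y_def by (simp add: algebra_simps)
    then have "norm ((if m \<le> nat \<lfloor>D\<rfloor> then g m / of_nat m * complex_of_real (harm (nat \<lfloor>D\<rfloor> div m)) else 0)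
      - g m / of_nat m * complex_of_real (ln (D / real m) + euler_mascheroni))
      = norm (g m) / real m * \<bar>harm (nat \<lfloor>y\<rfloor>) - ln y - euler_mascheroni\<bar>"
      by (simp only: norm_mult nx norm_of_real)
    also have "\<dots> \<le> norm (g m) / real m * (euler_mascheroni / y)"
      by (intro mult_left_mono harm_bound y1) (use m1 in auto)
    also have "\<dots> = norm (g m) / D * (euler_mascheroni - ln (max 1 (real m / D)))"
      unfolding mx y_def using m1 D by (simp add: field_simps)
    finally show ?thesis .
  next
    case False
    then have mD: "real m > D" using D by linarith
    have mK: "real m \<le> exp euler_mascheroni * D" using m D by auto linarith
    then have mE: "real m / D \<le> exp euler_mascheroni" using D by (simp add: divide_le_eq mult.commute)
    have lnle: "ln (real m / D) \<le> euler_mascheroni"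
    proof -
      have "ln (real m / D) \<le> ln (exp euler_mascheroni)" using mE D m1 by (intro ln_mono) auto
      then show ?thesis by simp
    qed
    have mx: "max 1 (real m / D) = real m / D" using mD D by simp
    have le: "ln (D / real m) + euler_mascheroni = euler_mascheroni - ln (real m / D)"
      using D m1 by (simp add: ln_div)
    have "norm ((if m \<le> nat \<lfloor>D\<rfloor> then g m / of_nat m * complex_of_real (harm (nat \<lfloor>D\<rfloor> div m)) else 0)
      - g m / of_nat m * complex_of_real (ln (D / real m) + euler_mascheroni))
      = norm (g m) / real m * \<bar>euler_mascheroni - ln (real m / D)\<bar>"
      using False unfolding le by (simp only: if_False diff_0 norm_minus_cancel norm_mult nx norm_of_real)
    also have "\<bar>euler_mascheroni - ln (real m / D)\<bar> = euler_mascheroni - ln (real m / D)" using lnle by simp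
    also have "norm (g m) / real m * (euler_mascheroni - ln (real m / D)) \<le> norm (g m) / D * (euler_mascheroni - ln (real m / D))"
      by (intro mult_right_mono divide_left_mono) (use lnle mD D m1 in auto)
    finally show ?thesis unfolding mx .
  qed
qed


theorem mainTheorem11:
  fixes g :: "nat \<Rightarrow> complex" and D :: real
  assumes "summable (\<lambda>m. g m / of_nat m)"
      and "summable (\<lambda>m. g m * complex_of_real (ln (real m)) / of_nat m)"
      and "(\<lambda>t. norm (Gsharp g t) / t) integrable_on {1..}"
      and "D \<ge> 1"
  shows "\<exists>E::complex.
     (\<Sum>n\<in>{1..nat \<lfloor>D\<rfloor>}. conv_one g n / of_nat n)
       = (\<Sum>m. g m / of_nat m * complex_of_real (ln (D / real m) + euler_mascheroni))
         + integral {exp euler_mascheroni * D..} (\<lambda>t. Gsharp g t / complex_of_real t)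
         + E
     \<and> norm E \<le> (1 / D) * integral {1..exp euler_mascheroni}
          (\<lambda>u. (\<Sum>m\<in>{1..nat \<lfloor>u * D\<rfloor>}. norm (g m)) / u)"
proof -
  note sx = assms(1) and sy = assms(2) and hint = assms(3) and D = assms(4)
  define N where "N = nat \<lfloor>D\<rfloor>"
  define K where "K = nat \<lfloor>exp euler_mascheroni * D\<rfloor>"
  define LHS where "LHS = (\<Sum>n\<in>{1..nat \<lfloor>D\<rfloor>}. conv_one g n / of_nat n)"
  define MAIN where "MAIN = (\<Sum>m. g m / of_nat m * complex_of_real (ln (D / real m) + euler_mascheroni))"
  define I where "I = integral {exp euler_mascheroni * D..} (\<lambda>t. Gsharp g t / complex_of_real t)"
  define h where "h m = g m / of_nat m * complex_of_real (ln (D / real m) + euler_mascheroni)" for m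
  define c where "c m = (if m \<le> N then g m / of_nat m * complex_of_real (harm (N div m)) else 0)" for m
  define E where "E = LHS - MAIN - I"
  have g0: "(euler_mascheroni::real) > 0" by (rule euler_mascheroni_pos)
  have NK: "N \<le> K"
  proof -
    have "D \<le> exp euler_mascheroni * D" using g0 D by (simp add: mult_le_cancel_right1)
    then show ?thesis unfolding N_def K_def by (intro nat_mono floor_mono)
  qed
  have MI: "MAIN + I = (\<Sum>m\<in>{1..K}. h m)"
    unfolding MAIN_def I_def K_def h_def by (rule main_plus_I[OF sx sy hint D])
  have L: "LHS = (\<Sum>m\<in>{1..K}. c m)"
  proof -
    have "LHS = (\<Sum>m\<in>{1..N}. g m / of_nat m * complex_of_real (harm (N div m)))"
      unfolding LHS_def N_def by (rule lhs_rearr)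
    also have "\<dots> = (\<Sum>m\<in>{m\<in>{1..K}. m \<le> N}. g m / of_nat m * complex_of_real (harm (N div m)))"
      using NK by (intro sum.cong) auto
    also have "\<dots> = (\<Sum>m\<in>{1..K}. c m)"
      unfolding c_def by (rule sum.inter_filter) simp
    finally show ?thesis .
  qed
  have EE: "E = (\<Sum>m\<in>{1..K}. c m - h m)"
    unfolding E_def sum_subtractf L using MI by (simp add: algebra_simps)
  have R: "integral {1..exp euler_mascheroni} (\<lambda>u. (\<Sum>m\<in>{1..nat \<lfloor>u * D\<rfloor>}. norm (g m)) / u)
      = (\<Sum>m\<in>{1..K}. norm (g m) * (euler_mascheroni - ln (max 1 (real m / D))))"
    unfolding K_def by (rule integral_unique[OF R_int[OF D]])
  have "norm E \<le> (\<Sum>m\<in>{1..K}. norm (c m - h m))" unfolding EE by (rule norm_sum)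
  also have "\<dots> \<le> (\<Sum>m\<in>{1..K}. norm (g m) / D * (euler_mascheroni - ln (max 1 (real m / D))))"
  proof (rule sum_mono)
    fix m assume "m \<in> {1..K}"
    then show "norm (c m - h m) \<le> norm (g m) / D * (euler_mascheroni - ln (max 1 (real m / D)))"
      unfolding c_def h_def N_def K_def by (rule term_bound[OF D])
  qed
  also have "\<dots> = (1 / D) * (\<Sum>m\<in>{1..K}. norm (g m) * (euler_mascheroni - ln (max 1 (real m / D))))"
    by (simp add: sum_distrib_left)
  finally have "norm E \<le> (1 / D) * integral {1..exp euler_mascheroni} (\<lambda>u. (\<Sum>m\<in>{1..nat \<lfloor>u * D\<rfloor>}. norm (g m)) / u)"
    unfolding R .
  moreover have "LHS = MAIN + I + E" unfolding E_def by simp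
  ultimately show ?thesis unfolding LHS_def MAIN_def I_def by blast
qed


end
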